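(* Let $G$ be a $P_6$-free graph, let $\Omega$ be a potential maximal clique of $G$, and let $C^1,C^2$ be two different connected components of $G-\Omega$. Then $N(C^1)\setminus N(C^2)$ is fully adjacent to $C^1$, or $N(C^2)\setminus N(C^1)$ is fully adjacent to $C^2$.
   Context: All graphs are finite, simple and undirected. $P_6$ is the path on six vertices; $G$ is $P_6$-free if it has no induced subgraph isomorphic to $P_6$. For a vertex set $C$, $N(C)$ is the set of vertices outside $C$ with a neighbour in $C$. A set $Z$ is fully adjacent to $C$ if every vertex of $Z$ is adjacent to every vertex of $C$. A triangulation of $G$ is a set $F$ of non-edges such that $(V(G),E(G)\cup F)$ is chordal; it is minimal if no proper subset is a triangulation. A potential maximal clique of $G$ is a maximal clique of $(V(G),E(G)\cup F)$ for some minimal triangulation $F$. *)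

theory Defs
  imports Main
begin

definition simple_graph :: "'a set \<Rightarrow> 'a set set \<Rightarrow> bool" where
  "simple_graph V E \<longleftrightarrow> finite V \<and>
     (\<forall>e\<in>E. \<exists>u v. e = {u, v} \<and> u \<noteq> v \<and> u \<in> V \<and> v \<in> V)"

definition adj :: "'a set set \<Rightarrow> 'a \<Rightarrow> 'a \<Rightarrow> bool" where
  "adj E u v \<longleftrightarrow> {u, v} \<in> E"

definition P6_free :: "'a set \<Rightarrow> 'a set set \<Rightarrow> bool" where
  "P6_free V E \<longleftrightarrow> \<not> (\<exists>xs. length xs = 6 \<and> distinct xs \<and> set xs \<subseteq> V \<and>
      (\<forall>i<6. \<forall>j<6. adj E (xs ! i) (xs ! j) \<longleftrightarrow> (i = j + 1 \<or> j = i + 1)))"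

definition chordal :: "'a set \<Rightarrow> 'a set set \<Rightarrow> bool" where
  "chordal V E \<longleftrightarrow>
     (\<forall>xs. let n = length xs in
        (n \<ge> 4 \<and> distinct xs \<and> set xs \<subseteq> V \<and>
         (\<forall>i<n. adj E (xs ! i) (xs ! ((i + 1) mod n))))
        \<longrightarrow> (\<exists>i<n. \<exists>j<n. i \<noteq> j \<and> j \<noteq> (i + 1) mod n \<and> i \<noteq> (j + 1) mod n
                 \<and> adj E (xs ! i) (xs ! j)))"

definition non_edges :: "'a set \<Rightarrow> 'a set set \<Rightarrow> 'a set set" where
  "non_edges V E = {{u, v} | u v. u \<in> V \<and> v \<in> V \<and> u \<noteq> v} - E"

definition triangulation :: "'a set \<Rightarrow> 'a set set \<Rightarrow> 'a set set \<Rightarrow> bool" where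
  "triangulation V E F \<longleftrightarrow> F \<subseteq> non_edges V E \<and> chordal V (E \<union> F)"

definition minimal_triangulation :: "'a set \<Rightarrow> 'a set set \<Rightarrow> 'a set set \<Rightarrow> bool" where
  "minimal_triangulation V E F \<longleftrightarrow> triangulation V E F \<and>
     (\<forall>F'. F' \<subset> F \<longrightarrow> \<not> triangulation V E F')"

definition is_clique :: "'a set \<Rightarrow> 'a set set \<Rightarrow> 'a set \<Rightarrow> bool" where
  "is_clique V E K \<longleftrightarrow> K \<subseteq> V \<and> (\<forall>u\<in>K. \<forall>v\<in>K. u \<noteq> v \<longrightarrow> adj E u v)"

definition maximal_clique :: "'a set \<Rightarrow> 'a set set \<Rightarrow> 'a set \<Rightarrow> bool" where
  "maximal_clique V E K \<longleftrightarrow> is_clique V E K \<and> (\<forall>K'. is_clique V E K' \<longrightarrow> K \<subseteq> K' \<longrightarrow> K' = K)"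

definition potential_maximal_clique :: "'a set \<Rightarrow> 'a set set \<Rightarrow> 'a set \<Rightarrow> bool" where
  "potential_maximal_clique V E \<Omega> \<longleftrightarrow>
     (\<exists>F. minimal_triangulation V E F \<and> maximal_clique V (E \<union> F) \<Omega>)"

definition adj_in :: "'a set set \<Rightarrow> 'a set \<Rightarrow> 'a \<Rightarrow> 'a \<Rightarrow> bool" where
  "adj_in E S u v \<longleftrightarrow> u \<in> S \<and> v \<in> S \<and> adj E u v"

definition component :: "'a set set \<Rightarrow> 'a set \<Rightarrow> 'a set \<Rightarrow> bool" where
  "component E S C \<longleftrightarrow> (\<exists>x\<in>S. C = {y. (adj_in E S)\<^sup>*\<^sup>* x y})"

definition nbhd :: "'a set \<Rightarrow> 'a set set \<Rightarrow> 'a set \<Rightarrow> 'a set" where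
  "nbhd V E C = {v \<in> V - C. \<exists>u\<in>C. adj E u v}"

definition fully_adjacent :: "'a set set \<Rightarrow> 'a set \<Rightarrow> 'a set \<Rightarrow> bool" where
  "fully_adjacent E Z C \<longleftrightarrow> (\<forall>z\<in>Z. \<forall>c\<in>C. adj E z c)"

end

theory Submission
  imports Defs
begin


lemma adj_sym: "adj E u v = adj E v u"
  by (simp add: adj_def insert_commute)

lemma adj_irr: "simple_graph V E \<Longrightarrow> \<not> adj E v v"
  by (auto simp: simple_graph_def adj_def doubleton_eq_iff)

lemma adj_V: "simple_graph V E \<Longrightarrow> adj E u v \<Longrightarrow> u \<in> V \<and> v \<in> V"
  by (auto simp: simple_graph_def adj_def doubleton_eq_iff)

lemma adj_in_sym: "adj_in E S u v = adj_in E S v u"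
  by (auto simp: adj_in_def adj_sym)

lemma reach_sym: "(adj_in E S)\<^sup>*\<^sup>* u v \<Longrightarrow> (adj_in E S)\<^sup>*\<^sup>* v u"
proof (induction rule: rtranclp_induct)
  case base then show ?case by simp
next
  case (step y z)
  then show ?case by (metis adj_in_sym converse_rtranclp_into_rtranclp)
qed

lemma reach_S: "(adj_in E S)\<^sup>*\<^sup>* u v \<Longrightarrow> u \<in> S \<Longrightarrow> v \<in> S"
  by (induction rule: rtranclp_induct) (auto simp: adj_in_def)

lemma comp_sub: "component E S C \<Longrightarrow> C \<subseteq> S"
  unfolding component_def using reach_S by fastforce

lemma comp_closed: "component E S C \<Longrightarrow> u \<in> C \<Longrightarrow> v \<in> S \<Longrightarrow> adj E u v \<Longrightarrow> v \<in> C"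
proof -
  assume c: "component E S C" and u: "u \<in> C" and v: "v \<in> S" and a: "adj E u v"
  from c obtain r where r: "r \<in> S" "C = {y. (adj_in E S)\<^sup>*\<^sup>* r y}" unfolding component_def by blast
  have "u \<in> S" using comp_sub[OF c] u by blast
  then have "adj_in E S u v" using v a by (simp add: adj_in_def)
  then show "v \<in> C" using r u by (auto intro: rtranclp.rtrancl_into_rtrancl)
qed

lemma comp_reach: "component E S C \<Longrightarrow> u \<in> C \<Longrightarrow> v \<in> C \<Longrightarrow> (adj_in E S)\<^sup>*\<^sup>* u v"
proof -
  assume c: "component E S C" and u: "u \<in> C" and v: "v \<in> C"
  from c obtain r where r: "C = {y. (adj_in E S)\<^sup>*\<^sup>* r y}" unfolding component_def by blast
  have "(adj_in E S)\<^sup>*\<^sup>* r u" "(adj_in E S)\<^sup>*\<^sup>* r v" using u v r by auto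
  then show ?thesis by (meson reach_sym rtranclp_trans)
qed

lemma comp_disj: "component E S C1 \<Longrightarrow> component E S C2 \<Longrightarrow> C1 \<noteq> C2 \<Longrightarrow> C1 \<inter> C2 = {}"
proof (rule ccontr)
  assume c1: "component E S C1" and c2: "component E S C2" and ne: "C1 \<noteq> C2" and "C1 \<inter> C2 \<noteq> {}"
  then obtain z where z: "z \<in> C1" "z \<in> C2" by blast
  from c1 obtain r1 where r1: "C1 = {y. (adj_in E S)\<^sup>*\<^sup>* r1 y}" unfolding component_def by blast
  from c2 obtain r2 where r2: "C2 = {y. (adj_in E S)\<^sup>*\<^sup>* r2 y}" unfolding component_def by blast
  have "(adj_in E S)\<^sup>*\<^sup>* r1 z" "(adj_in E S)\<^sup>*\<^sup>* r2 z" using z r1 r2 by auto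
  then have r12: "(adj_in E S)\<^sup>*\<^sup>* r1 r2" by (meson reach_sym rtranclp_trans)
  then have r21: "(adj_in E S)\<^sup>*\<^sup>* r2 r1" by (rule reach_sym)
  have "C1 \<subseteq> C2"
  proof
    fix y assume "y \<in> C1"
    then have "(adj_in E S)\<^sup>*\<^sup>* r1 y" using r1 by simp
    then have "(adj_in E S)\<^sup>*\<^sup>* r2 y" using r21 by (rule rtranclp_trans[rotated])
    then show "y \<in> C2" using r2 by simp
  qed
  moreover have "C2 \<subseteq> C1"
  proof
    fix y assume "y \<in> C2"
    then have "(adj_in E S)\<^sup>*\<^sup>* r2 y" using r2 by simp
    then have "(adj_in E S)\<^sup>*\<^sup>* r1 y" using r12 by (rule rtranclp_trans[rotated])
    then show "y \<in> C1" using r1 by simp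
  qed
  ultimately have "C1 = C2" by blast
  then show False using ne by simp
qed

lemma comp_noadj: "component E S C1 \<Longrightarrow> component E S C2 \<Longrightarrow> C1 \<noteq> C2 \<Longrightarrow> u \<in> C1 \<Longrightarrow> v \<in> C2 \<Longrightarrow> \<not> adj E u v"
proof
  assume c1: "component E S C1" and c2: "component E S C2" and ne: "C1 \<noteq> C2" and u: "u \<in> C1"
    and v: "v \<in> C2" and a: "adj E u v"
  have "v \<in> S" using comp_sub[OF c2] v by blast
  then have "v \<in> C1" using comp_closed[OF c1 u _ a] by blast
  then show False using comp_disj[OF c1 c2 ne] v by blast
qed

lemma reach_ivt: "(adj_in E S)\<^sup>*\<^sup>* u v \<Longrightarrow> P u \<Longrightarrow> \<not> P v \<Longrightarrow>
   \<exists>a b. (adj_in E S)\<^sup>*\<^sup>* u a \<and> adj_in E S a b \<and> P a \<and> \<not> P b"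
proof (induction rule: rtranclp_induct)
  case base then show ?case by simp
next
  case (step y z)
  show ?case
  proof (cases "P y")
    case True then show ?thesis using step by blast
  next
    case False then show ?thesis using step by blast
  qed
qed

lemma comp_edge:
  assumes c: "component E S C" and u0: "u0 \<in> C" "adj E u0 x" and cc: "c \<in> C" "\<not> adj E x c"
  shows "\<exists>a b. a \<in> C \<and> b \<in> C \<and> adj E a b \<and> adj E x a \<and> \<not> adj E x b"
proof -
  have "(adj_in E S)\<^sup>*\<^sup>* u0 c" using comp_reach[OF c u0(1) cc(1)] .
  from reach_ivt[OF this, of "\<lambda>v. adj E x v"] u0 cc obtain a b where
    ab: "(adj_in E S)\<^sup>*\<^sup>* u0 a" "adj_in E S a b" "adj E x a" "\<not> adj E x b"
    by (auto simp: adj_sym)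
  have "a \<in> C" using c u0(1) ab(1) unfolding component_def
    by (auto intro: rtranclp_trans)
  moreover have "b \<in> C" using comp_closed[OF c \<open>a \<in> C\<close>] ab(2) by (auto simp: adj_in_def)
  ultimately show ?thesis using ab by (auto simp: adj_in_def)
qed

lemma ivt_nat: "a \<le> b \<Longrightarrow> P a \<Longrightarrow> \<not> P b \<Longrightarrow> \<exists>k. a \<le> k \<and> k < b \<and> P k \<and> \<not> P (Suc k)"
proof (induction b)
  case 0 then show ?case by simp
next
  case (Suc b)
  show ?case
  proof (cases "a = Suc b")
    case True then show ?thesis using Suc by simp
  next
    case False
    then have "a \<le> b" using Suc by simp
    show ?thesis
    proof (cases "P b")
      case True then show ?thesis using Suc \<open>a \<le> b\<close> by auto
    next
      case False then show ?thesis using Suc.IH[OF \<open>a \<le> b\<close> Suc.prems(2)] by (metis less_Suc_eq)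
    qed
  qed
qed

lemma mod_ne: "(a::nat) < b \<Longrightarrow> b < a + n \<Longrightarrow> a mod n \<noteq> b mod n"
proof
  assume "a < b" "b < a + n" "a mod n = b mod n"
  then have "n dvd b - a" using mod_eq_dvd_iff_nat by (metis less_imp_le)
  moreover have "0 < b - a" "b - a < n" using \<open>a<b\<close> \<open>b < a+n\<close> by auto
  ultimately show False using nat_dvd_not_less by blast
qed

lemma mod_arith:
  assumes "0 < (n::nat)" "1 \<le> k1" "k1 + 2 \<le> k3" "k3 < n"
  shows "(p+k1) mod n \<noteq> (p+k3) mod n \<and> (p+k3) mod n \<noteq> ((p+k1) mod n + 1) mod n
      \<and> (p+k1) mod n \<noteq> ((p+k3) mod n + 1) mod n"
proof -
  have 1: "(p+k1) mod n \<noteq> (p+k3) mod n" using mod_ne[of "p+k1" "p+k3" n] assms by simp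
  have 2: "(p+k3) mod n \<noteq> (p+k1+1) mod n" using mod_ne[of "p+k1+1" "p+k3" n] assms by simp
  have "(p+k3+1) mod n \<noteq> (p+k1+n) mod n" using mod_ne[of "p+k3+1" "p+k1+n" n] assms by simp
  then have 3: "(p+k1) mod n \<noteq> (p+k3+1) mod n" by simp
  show ?thesis using 1 2 3 by (simp add: mod_Suc_eq)
qed


lemma chordal_split:
  assumes ch: "chordal V H"
  and sub: "\<And>u v. adj H' u v \<Longrightarrow> adj H u v"
  and miss: "\<And>u v. adj H u v \<Longrightarrow> \<not> adj H' u v \<Longrightarrow> (u \<in> D \<and> v \<in> R) \<or> (u \<in> R \<and> v \<in> D)"
  and noDR: "\<And>u v. u \<in> D \<Longrightarrow> v \<in> R \<Longrightarrow> \<not> adj H' u v"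
  and part: "V \<subseteq> D \<union> R \<union> T" "D \<inter> T = {}" "R \<inter> T = {}" "D \<inter> R = {}"
  and Tcl: "\<And>u v. u \<in> T \<Longrightarrow> v \<in> T \<Longrightarrow> u \<noteq> v \<Longrightarrow> adj H' u v"
  shows "chordal V H'"
  unfolding chordal_def Let_def
proof (intro allI impI)
  fix xs :: "'a list"
  let ?n = "length xs"
  assume A: "4 \<le> ?n \<and> distinct xs \<and> set xs \<subseteq> V \<and> (\<forall>i<?n. adj H' (xs ! i) (xs ! ((i + 1) mod ?n)))"
  then have n4: "4 \<le> ?n" and dist: "distinct xs" and sV: "set xs \<subseteq> V"
    and cyc: "\<And>i. i < ?n \<Longrightarrow> adj H' (xs ! i) (xs ! ((i + 1) mod ?n))" by auto
  have "\<exists>i<?n. \<exists>j<?n. i \<noteq> j \<and> j \<noteq> (i + 1) mod ?n \<and> i \<noteq> (j + 1) mod ?n \<and> adj H (xs ! i) (xs ! j)"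
    using ch A sub unfolding chordal_def Let_def by blast
  then obtain i j where ij: "i < ?n" "j < ?n" "i \<noteq> j" "j \<noteq> (i + 1) mod ?n" "i \<noteq> (j + 1) mod ?n"
    "adj H (xs ! i) (xs ! j)" by blast
  show "\<exists>i<?n. \<exists>j<?n. i \<noteq> j \<and> j \<noteq> (i + 1) mod ?n \<and> i \<noteq> (j + 1) mod ?n \<and> adj H' (xs ! i) (xs ! j)"
  proof (cases "adj H' (xs ! i) (xs ! j)")
    case True then show ?thesis using ij by blast
  next
    case False
    then have "\<exists>p<?n. \<exists>q<?n. xs ! p \<in> D \<and> xs ! q \<in> R" using miss[OF ij(6)] ij(1,2) by blast
    then obtain p q where pq: "p < ?n" "q < ?n" "xs ! p \<in> D" "xs ! q \<in> R" by blast
    define g where "g k = xs ! ((p + k) mod ?n)" for k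
    have n0: "0 < ?n" using n4 by linarith
    have gV: "g k \<in> D \<union> R \<union> T" for k
      using sV part(1) n0 unfolding g_def by (meson mod_less_divisor nth_mem subsetD)
    have gstep: "adj H' (g k) (g (Suc k))" for k
    proof -
      have "adj H' (xs ! ((p + k) mod ?n)) (xs ! (((p + k) mod ?n + 1) mod ?n))"
        using cyc n0 by simp
      then show ?thesis unfolding g_def by (simp add: mod_Suc_eq)
    qed
    have tD: "g k \<in> D \<Longrightarrow> g (Suc k) \<notin> R" for k using noDR gstep by blast
    have tR: "g k \<in> R \<Longrightarrow> g (Suc k) \<notin> D" for k using noDR gstep by (metis adj_sym)
    have g0: "g 0 \<in> D" using pq unfolding g_def by simp
    have gn: "g ?n \<in> D" using pq n0 unfolding g_def by simp
    define kq where "kq = (if p \<le> q then q - p else q + ?n - p)"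
    have gkq: "g kq = xs ! q" unfolding g_def kq_def using pq by auto
    have "p \<noteq> q" using pq part(4) by auto
    then have kq0: "0 < kq" "kq < ?n" unfolding kq_def using pq by auto
    obtain k0 where k0: "k0 < kq" "g k0 \<in> D" "g (Suc k0) \<notin> D"
      using ivt_nat[of 0 kq "\<lambda>k. g k \<in> D"] g0 gkq pq(4) part(4) by auto
    have T1: "g (Suc k0) \<in> T" using gV[of "Suc k0"] tD[OF k0(2)] k0(3) by blast
    have k1q: "Suc k0 < kq" using k0 T1 gkq pq(4) part(3) by (metis disjoint_iff le_neq_implies_less Suc_leI)
    obtain k' where k': "kq \<le> k'" "k' < ?n" "g k' \<in> R" "g (Suc k') \<notin> R"
      using ivt_nat[of kq ?n "\<lambda>k. g k \<in> R"] kq0 gkq pq(4) gn part(4) by auto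
    have T3: "g (Suc k') \<in> T" using gV[of "Suc k'"] tR[OF k'(3)] k'(4) by blast
    have k3n: "Suc k' < ?n" using k' T3 gn part(2) by (metis disjoint_iff le_neq_implies_less Suc_leI)
    have ar: "(p + Suc k0) mod ?n \<noteq> (p + Suc k') mod ?n \<and> (p + Suc k') mod ?n \<noteq> ((p + Suc k0) mod ?n + 1) mod ?n
      \<and> (p + Suc k0) mod ?n \<noteq> ((p + Suc k') mod ?n + 1) mod ?n"
      using mod_arith[of ?n "Suc k0" "Suc k'" p] n0 k1q k' k3n by simp
    have "xs ! ((p + Suc k0) mod ?n) \<noteq> xs ! ((p + Suc k') mod ?n)"
      using ar dist n0 by (simp add: nth_eq_iff_index_eq)
    then have "adj H' (xs ! ((p + Suc k0) mod ?n)) (xs ! ((p + Suc k') mod ?n))"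
      using Tcl T1 T3 unfolding g_def by blast
    then show ?thesis using ar n0 by (meson mod_less_divisor)
  qed
qed




definition walk :: "'a set set \<Rightarrow> 'a set \<Rightarrow> (nat \<Rightarrow> 'a) \<Rightarrow> nat \<Rightarrow> bool" where
  "walk E S w m \<longleftrightarrow> (\<forall>k\<le>m. w k \<in> S) \<and> (\<forall>k<m. adj E (w k) (w (Suc k)))"

lemma reach_walk: "(adj_in E S)\<^sup>*\<^sup>* u v \<Longrightarrow> u \<in> S \<Longrightarrow> \<exists>w m. walk E S w m \<and> w 0 = u \<and> w m = v"
proof (induction rule: rtranclp_induct)
  case base
  have "walk E S (\<lambda>_. u) 0" using base by (simp add: walk_def)
  then show ?case by blast
next
  case (step y z)
  then obtain w m where w: "walk E S w m" "w 0 = u" "w m = y" by blast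
  define w' where "w' k = (if k \<le> m then w k else z)" for k
  have "walk E S w' (Suc m)" unfolding walk_def
  proof (intro conjI allI impI)
    fix k assume "k \<le> Suc m" then show "w' k \<in> S"
      using w(1) step(2) unfolding walk_def w'_def adj_in_def by (cases "k \<le> m") auto
  next
    fix k assume k: "k < Suc m" show "adj E (w' k) (w' (Suc k))"
    proof (cases "k < m")
      case True then show ?thesis using w(1) unfolding walk_def w'_def by simp
    next
      case False then have "k = m" using k by simp
      then show ?thesis using w(3) step(2) unfolding w'_def adj_in_def by simp
    qed
  qed
  moreover have "w' 0 = u" "w' (Suc m) = z" using w unfolding w'_def by auto
  ultimately show ?case by blast
qed

lemma short_gen:
  assumes w: "walk E S w m" and ij: "i < m" "i + d < m" "adj E (w i) (w (Suc (i + d)))"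
  defines "w' \<equiv> (\<lambda>k. if k \<le> i then w k else w (k + d))"
  shows "walk E S w' (m - d) \<and> w' 0 = w 0 \<and> w' (m - d) = w m"
proof (intro conjI)
  show "walk E S w' (m - d)" unfolding walk_def
  proof (intro conjI allI impI)
    fix k assume k: "k \<le> m - d"
    show "w' k \<in> S"
    proof (cases "k \<le> i")
      case True then have "k \<le> m" using ij by simp
      then show ?thesis using w True unfolding walk_def w'_def by simp
    next
      case False then have "k + d \<le> m" using k ij by simp
      then show ?thesis using w False unfolding walk_def w'_def by simp
    qed
  next
    fix k assume k: "k < m - d"
    consider "k < i" | "k = i" | "i < k" by linarith
    then show "adj E (w' k) (w' (Suc k))"
    proof cases
      case 1 then have "k < m" using ij by simp
      then show ?thesis using w 1 unfolding walk_def w'_def by simp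
    next
      case 2 then show ?thesis using ij unfolding w'_def by simp
    next
      case 3 then have "k + d < m" using k by simp
      then have "adj E (w (k + d)) (w (Suc (k + d)))" using w unfolding walk_def by simp
      then show ?thesis using 3 unfolding w'_def by simp
    qed
  qed
  show "w' 0 = w 0" unfolding w'_def by simp
  have "\<not> m - d \<le> i" using ij(2) by linarith
  then show "w' (m - d) = w m" using ij unfolding w'_def by simp
qed

lemma shortest_walk:
  assumes "walk E S w0 m0" "w0 0 = u" "w0 m0 = v"
  shows "\<exists>w m. walk E S w m \<and> w 0 = u \<and> w m = v \<and> (\<forall>i j. i < j \<longrightarrow> j \<le> m \<longrightarrow> w i \<noteq> w j)
     \<and> (\<forall>i j. i + 1 < j \<longrightarrow> j \<le> m \<longrightarrow> \<not> adj E (w i) (w j))"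
proof -
  let ?P = "\<lambda>m. \<exists>w. walk E S w m \<and> w 0 = u \<and> w m = v"
  have ex: "?P m0" using assms by blast
  define m where "m = (LEAST m. ?P m)"
  have Pm: "?P m" unfolding m_def using ex by (rule LeastI)
  have minm: "\<And>m'. m' < m \<Longrightarrow> \<not> ?P m'" unfolding m_def using not_less_Least by blast
  from Pm obtain w where w: "walk E S w m" "w 0 = u" "w m = v" by blast
  have inj: "\<forall>i j. i < j \<longrightarrow> j \<le> m \<longrightarrow> w i \<noteq> w j"
  proof (intro allI impI notI)
    fix i j assume ij: "i < j" "j \<le> m" "w i = w j"
    show False
    proof (cases "j = m")
      case True
      have "walk E S w i" using w(1) ij unfolding walk_def by simp
      then have "?P i" using w ij True by auto
      then show False using minm ij True by blast
    next
      case False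
      then have jm: "j < m" using ij by simp
      have "adj E (w j) (w (Suc j))" using w(1) jm unfolding walk_def by simp
      then have a: "adj E (w i) (w (Suc (i + (j - i))))" using ij by simp
      have "i + (j - i) < m" using ij jm by simp
      have "i < m" using ij jm by simp
      from short_gen[OF w(1) this \<open>i + (j - i) < m\<close> a] w(2,3) have "?P (m - (j - i))" by blast
      moreover have "m - (j - i) < m" using ij by auto
      ultimately show False using minm by blast
    qed
  qed
  have ind: "\<forall>i j. i + 1 < j \<longrightarrow> j \<le> m \<longrightarrow> \<not> adj E (w i) (w j)"
  proof (intro allI impI notI)
    fix i j assume ij: "i + 1 < j" "j \<le> m" "adj E (w i) (w j)"
    then have a: "adj E (w i) (w (Suc (i + (j - i - 1))))" by (simp add: Suc_diff_Suc)
    have "i + (j - i - 1) < m" "i < m" using ij by auto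
    from short_gen[OF w(1) this(2,1) a] w(2,3) have "?P (m - (j - i - 1))" by blast
    moreover have "m - (j - i - 1) < m" using ij by auto
    ultimately show False using minm by blast
  qed
  show ?thesis using w inj ind by blast
qed



lemma P6_list:
  assumes sg: "simple_graph V E" and d: "distinct [v0,v1,v2,v3,v4,v5]"
    and V: "{v0,v1,v2,v3,v4,v5} \<subseteq> V"
    and e: "adj E v0 v1" "adj E v1 v2" "adj E v2 v3" "adj E v3 v4" "adj E v4 v5"
    and n: "\<not> adj E v0 v2" "\<not> adj E v0 v3" "\<not> adj E v0 v4" "\<not> adj E v0 v5"
       "\<not> adj E v1 v3" "\<not> adj E v1 v4" "\<not> adj E v1 v5"
       "\<not> adj E v2 v4" "\<not> adj E v2 v5" "\<not> adj E v3 v5"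
  shows "\<not> P6_free V E"
  unfolding P6_free_def not_not
proof (rule exI[of _ "[v0,v1,v2,v3,v4,v5]"])
  have irr: "\<And>v. \<not> adj E v v" using adj_irr[OF sg] .
  show "length [v0, v1, v2, v3, v4, v5] = 6 \<and> distinct [v0, v1, v2, v3, v4, v5] \<and>
    set [v0, v1, v2, v3, v4, v5] \<subseteq> V \<and>
    (\<forall>i<6. \<forall>j<6. adj E ([v0, v1, v2, v3, v4, v5] ! i) ([v0, v1, v2, v3, v4, v5] ! j) = (i = j + 1 \<or> j = i + 1))"
  proof (intro conjI)
    have e': "adj E v1 v0" "adj E v2 v1" "adj E v3 v2" "adj E v4 v3" "adj E v5 v4" using e adj_sym by metis+
    have n': "\<not> adj E v2 v0" "\<not> adj E v3 v0" "\<not> adj E v4 v0" "\<not> adj E v5 v0"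
       "\<not> adj E v3 v1" "\<not> adj E v4 v1" "\<not> adj E v5 v1"
       "\<not> adj E v4 v2" "\<not> adj E v5 v2" "\<not> adj E v5 v3" using n adj_sym by metis+
    show "\<forall>i<6. \<forall>j<6. adj E ([v0, v1, v2, v3, v4, v5] ! i) ([v0, v1, v2, v3, v4, v5] ! j) = (i = j + 1 \<or> j = i + 1)"
      using e e' n n' irr by (simp add: numeral_eq_Suc All_less_Suc2)
  qed (use d V in auto)
qed

lemma fill_reach:
  assumes sg: "simple_graph V E" and mt: "minimal_triangulation V E F"
    and cl: "is_clique V (E \<union> F) \<Omega>" and x: "x \<in> \<Omega>" and y: "y \<in> \<Omega>" and xy: "x \<noteq> y"
  shows "(adj_in E (V - (\<Omega> - {x,y})))\<^sup>*\<^sup>* x y"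
proof (rule ccontr)
  assume nr: "\<not> (adj_in E (V - (\<Omega> - {x,y})))\<^sup>*\<^sup>* x y"
  define T where "T = \<Omega> - {x,y}"
  define D where "D = {v. (adj_in E (V - T))\<^sup>*\<^sup>* x v}"
  define R where "R = V - T - D"
  define F' where "F' = F - {e. \<exists>u\<in>D. \<exists>v\<in>R. e = {u,v}}"
  have OV: "\<Omega> \<subseteq> V" using cl unfolding is_clique_def by blast
  have xS: "x \<in> V - T" using x OV unfolding T_def by blast
  have yS: "y \<in> V - T" using y OV unfolding T_def by blast
  have DS: "D \<subseteq> V - T" unfolding D_def using reach_S xS by fastforce
  have xD: "x \<in> D" unfolding D_def by simp
  have yR: "y \<in> R" using nr yS unfolding R_def D_def T_def by blast
  have nadj: "\<not> adj E x y"
  proof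
    assume "adj E x y"
    then have "adj_in E (V - T) x y" using xS yS by (simp add: adj_in_def)
    then show False using nr unfolding T_def by blast
  qed
  have "adj (E \<union> F) x y" using cl x y xy unfolding is_clique_def by blast
  then have xyF: "{x,y} \<in> F" using nadj by (auto simp: adj_def)
  have tri: "triangulation V E F" using mt unfolding minimal_triangulation_def by blast
  have F'F: "F' \<subset> F" unfolding F'_def using xyF xD yR by blast
  have "triangulation V E F'"
    unfolding triangulation_def
  proof
    show "F' \<subseteq> non_edges V E" using tri unfolding triangulation_def F'_def by blast
    show "chordal V (E \<union> F')"
    proof (rule chordal_split[where H="E \<union> F" and D=D and R=R and T=T])
      show "chordal V (E \<union> F)" using tri unfolding triangulation_def by blast
      show "\<And>u v. adj (E \<union> F') u v \<Longrightarrow> adj (E \<union> F) u v" unfolding adj_def F'_def by blast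
      show "(u \<in> D \<and> v \<in> R) \<or> (u \<in> R \<and> v \<in> D)" if "adj (E \<union> F) u v" "\<not> adj (E \<union> F') u v" for u v
      proof -
        from that have "{u,v} \<in> {e. \<exists>u\<in>D. \<exists>v\<in>R. e = {u,v}}" unfolding adj_def F'_def by blast
        then obtain d r where "d \<in> D" "r \<in> R" "{u,v} = {d,r}" by blast
        then show ?thesis by (auto simp: doubleton_eq_iff)
      qed
      show "\<not> adj (E \<union> F') u v" if "u \<in> D" "v \<in> R" for u v
      proof
        assume a: "adj (E \<union> F') u v"
        have "{u,v} \<notin> F'" unfolding F'_def using that by blast
        then have "adj E u v" using a by (auto simp: adj_def)
        moreover have "u \<in> V - T" "v \<in> V - T" using that DS unfolding R_def by auto
        ultimately have "adj_in E (V - T) u v" by (simp add: adj_in_def)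
        then have "v \<in> D" using that(1) unfolding D_def by (auto intro: rtranclp.rtrancl_into_rtrancl)
        then show False using that(2) unfolding R_def by blast
      qed
      show "V \<subseteq> D \<union> R \<union> T" unfolding R_def by blast
      show "D \<inter> T = {}" using DS by blast
      show "R \<inter> T = {}" unfolding R_def by blast
      show "D \<inter> R = {}" unfolding R_def by blast
      show "adj (E \<union> F') u v" if "u \<in> T" "v \<in> T" "u \<noteq> v" for u v
      proof -
        have "adj (E \<union> F) u v" using cl that unfolding is_clique_def T_def by blast
        moreover have "u \<notin> D" "u \<notin> R" "v \<notin> D" "v \<notin> R" using that DS unfolding R_def by auto
        ultimately show ?thesis unfolding adj_def F'_def by (auto simp: doubleton_eq_iff)
      qed
    qed
  qed
  then show False using mt F'F unfolding minimal_triangulation_def by blast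
qed



theorem lemma4:
  fixes V :: "'a set" and E :: "'a set set" and \<Omega> C1 C2 :: "'a set"
  assumes "simple_graph V E"
    and "P6_free V E"
    and "potential_maximal_clique V E \<Omega>"
    and "component E (V - \<Omega>) C1"
    and "component E (V - \<Omega>) C2"
    and "C1 \<noteq> C2"
  shows "fully_adjacent E (nbhd V E C1 - nbhd V E C2) C1 \<or>
         fully_adjacent E (nbhd V E C2 - nbhd V E C1) C2"
proof (rule ccontr)
  assume neg: "\<not> (fully_adjacent E (nbhd V E C1 - nbhd V E C2) C1 \<or>
         fully_adjacent E (nbhd V E C2 - nbhd V E C1) C2)"
  note sg = assms(1)
  have cc1: "component E (V - \<Omega>) C1" and cc2: "component E (V - \<Omega>) C2" using assms by auto
  have irr: "\<And>v. \<not> adj E v v" using adj_irr[OF sg] .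
  from neg obtain x c1 where x1: "x \<in> nbhd V E C1" "x \<notin> nbhd V E C2" and c1: "c1 \<in> C1" "\<not> adj E x c1"
    unfolding fully_adjacent_def by blast
  from neg obtain y c2 where y1: "y \<in> nbhd V E C2" "y \<notin> nbhd V E C1" and c2: "c2 \<in> C2" "\<not> adj E y c2"
    unfolding fully_adjacent_def by blast
  have C1S: "C1 \<subseteq> V - \<Omega>" using comp_sub[OF cc1] .
  have C2S: "C2 \<subseteq> V - \<Omega>" using comp_sub[OF cc2] .
  from x1(1) obtain u1 where xV: "x \<in> V" "x \<notin> C1" and u1: "u1 \<in> C1" "adj E u1 x"
    unfolding nbhd_def by blast
  from y1(1) obtain u2 where yV: "y \<in> V" "y \<notin> C2" and u2: "u2 \<in> C2" "adj E u2 y"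
    unfolding nbhd_def by blast
  have xO: "x \<in> \<Omega>"
  proof (rule ccontr)
    assume "x \<notin> \<Omega>"
    then have "x \<in> V - \<Omega>" using xV by blast
    then show False using comp_closed[OF cc1 u1(1) _ u1(2)] xV by blast
  qed
  have yO: "y \<in> \<Omega>"
  proof (rule ccontr)
    assume "y \<notin> \<Omega>"
    then have "y \<in> V - \<Omega>" using yV by blast
    then show False using comp_closed[OF cc2 u2(1) _ u2(2)] yV by blast
  qed
  have xnC2: "x \<notin> C2" using xO C2S by blast
  have ynC1: "y \<notin> C1" using yO C1S by blast
  have xy: "x \<noteq> y" using x1(1) y1(2) by blast
  have xnadjC2: "\<not> adj E x c" if "c \<in> C2" for c
  proof
    assume "adj E x c"
    then have "x \<in> nbhd V E C2" using xV xnC2 that unfolding nbhd_def by (auto simp: adj_sym)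
    then show False using x1(2) by blast
  qed
  have ynadjC1: "\<not> adj E y c" if "c \<in> C1" for c
  proof
    assume "adj E y c"
    then have "y \<in> nbhd V E C1" using yV ynC1 that unfolding nbhd_def by (auto simp: adj_sym)
    then show False using y1(2) by blast
  qed
  obtain a b where ab: "a \<in> C1" "b \<in> C1" "adj E a b" "adj E x a" "\<not> adj E x b"
    using comp_edge[OF cc1 u1 c1] by blast
  obtain a' b' where ab': "a' \<in> C2" "b' \<in> C2" "adj E a' b'" "adj E y a'" "\<not> adj E y b'"
    using comp_edge[OF cc2 u2 c2] by blast
  have n12: "\<not> adj E u v" if "u \<in> C1" "v \<in> C2" for u v
    using comp_noadj[OF cc1 cc2 assms(6) that] .
  have n21: "\<not> adj E v u" if "u \<in> C1" "v \<in> C2" for u v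
    using n12[OF that] by (simp add: adj_sym)
  have disj: "C1 \<inter> C2 = {}" using comp_disj[OF cc1 cc2 assms(6)] .
  from assms(3) obtain F where mt: "minimal_triangulation V E F" and mc: "maximal_clique V (E \<union> F) \<Omega>"
    unfolding potential_maximal_clique_def by blast
  have cl: "is_clique V (E \<union> F) \<Omega>" using mc unfolding maximal_clique_def by blast
  define T where "T = \<Omega> - {x,y}"
  have reach: "(adj_in E (V - T))\<^sup>*\<^sup>* x y" using fill_reach[OF sg mt cl xO yO xy] unfolding T_def .
  have xT: "x \<in> V - T" using xV unfolding T_def by blast
  obtain w0 m0 where "walk E (V - T) w0 m0" "w0 0 = x" "w0 m0 = y" using reach_walk[OF reach xT] by blast
  from shortest_walk[OF this] obtain w m where w: "walk E (V - T) w m" "w 0 = x" "w m = y"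
    and inj: "\<forall>i j. i < j \<longrightarrow> j \<le> m \<longrightarrow> w i \<noteq> w j"
    and ind: "\<forall>i j. i + 1 < j \<longrightarrow> j \<le> m \<longrightarrow> \<not> adj E (w i) (w j)" by blast
  have injr: "w i \<noteq> w j" if "i < j" "j \<le> m" for i j using inj that by blast
  have indr: "\<not> adj E (w i) (w j)" if "i + 1 < j" "j \<le> m" for i j using ind that by blast
  have wS: "w k \<in> V - T" if "k \<le> m" for k using w(1) that unfolding walk_def by blast
  have wadj: "adj E (w k) (w (Suc k))" if "k < m" for k using w(1) that unfolding walk_def by blast
  have m0: "0 < m"
  proof (rule ccontr)
    assume "\<not> 0 < m" then have "m = 0" by simp
    then show False using w xy by simp
  qed
  have int: "w k \<in> V - \<Omega>" if "0 < k" "k < m" for k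
  proof -
    have "w 0 \<noteq> w k" using injr[of 0 k] that by simp
    then have "w k \<noteq> x" using w(2) by simp
    moreover have "w k \<noteq> w m" using injr[of k m] that by simp
    then have "w k \<noteq> y" using w(3) by simp
    ultimately show ?thesis using wS[of k] that unfolding T_def by auto
  qed
  have intC1: "w k \<notin> C1" if k: "0 < k" "k < m" for k
  proof
    assume wk: "w k \<in> C1"
    have fw: "\<forall>d. k + d < m \<longrightarrow> w (k + d) \<in> C1"
    proof
      fix d show "k + d < m \<longrightarrow> w (k + d) \<in> C1"
      proof (induction d)
        case 0 show ?case using wk by simp
      next
        case (Suc d) show ?case
        proof
          assume lt: "k + Suc d < m"
          then have "w (k + d) \<in> C1" using Suc.IH by simp
          moreover have "w (k + Suc d) \<in> V - \<Omega>" using int lt k by simp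
          moreover have "adj E (w (k + d)) (w (k + Suc d))" using wadj[of "k + d"] lt by simp
          ultimately show "w (k + Suc d) \<in> C1" using comp_closed[OF cc1] by blast
        qed
      qed
    qed
    have lt: "k + (m - 1 - k) < m" and eq: "k + (m - 1 - k) = m - 1" using k by auto
    have "w (k + (m - 1 - k)) \<in> C1" using fw lt by blast
    then have wm1: "w (m - 1) \<in> C1" unfolding eq .
    have "adj E (w (m - 1)) (w (Suc (m - 1)))" using wadj[of "m - 1"] m0 by simp
    then have "adj E (w (m - 1)) y" using m0 w(3) by simp
    then have "y \<in> nbhd V E C1" using yV ynC1 wm1 unfolding nbhd_def by blast
    then show False using y1(2) by blast
  qed
  have intC2: "w k \<notin> C2" if k: "0 < k" "k < m" for k
  proof
    assume wk: "w k \<in> C2"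
    have bw: "\<forall>d. d < k \<longrightarrow> w (k - d) \<in> C2"
    proof
      fix d show "d < k \<longrightarrow> w (k - d) \<in> C2"
      proof (induction d)
        case 0 show ?case using wk by simp
      next
        case (Suc d) show ?case
        proof
          assume lt: "Suc d < k"
          then have "w (k - d) \<in> C2" using Suc.IH by simp
          moreover have "w (k - Suc d) \<in> V - \<Omega>" using int lt k by simp
          moreover have "adj E (w (k - Suc d)) (w (Suc (k - Suc d)))" using wadj[of "k - Suc d"] lt k by simp
          moreover have "Suc (k - Suc d) = k - d" using lt by simp
          ultimately have "adj E (w (k - d)) (w (k - Suc d))" "w (k - d) \<in> C2" "w (k - Suc d) \<in> V - \<Omega>"
            by (auto simp: adj_sym)
          then show "w (k - Suc d) \<in> C2" using comp_closed[OF cc2] by blast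
        qed
      qed
    qed
    have lt: "k - 1 < k" and eq: "k - (k - 1) = 1" using k by auto
    have "w (k - (k - 1)) \<in> C2" using bw lt by blast
    then have w1: "w 1 \<in> C2" unfolding eq .
    have "adj E (w 0) (w (Suc 0))" using wadj[of 0] m0 by simp
    then have "adj E w1x x" if "w1x = w 1" for w1x using w(2) that by (simp add: adj_sym)
    then have "x \<in> nbhd V E C2" using xV xnC2 w1 unfolding nbhd_def by blast
    then show False using x1(2) by blast
  qed
  have nC1: "w k \<notin> C1" if "0 < k" "k \<le> m" for k
    using intC1[of k] that w(3) ynC1 by (cases "k = m") auto
  have nC2: "w k \<notin> C2" if "k < m" for k
    using intC2[of k] that w(2) xnC2 by (cases "k = 0") auto
  have naC1: "\<not> adj E c (w k)" if "0 < k" "k \<le> m" "c \<in> C1" for k c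
  proof (cases "k = m")
    case True then show ?thesis using ynadjC1[OF that(3)] w(3) by (simp add: adj_sym)
  next
    case False
    then have "w k \<in> V - \<Omega>" using int that by simp
    then show ?thesis using comp_closed[OF cc1 that(3)] intC1[of k] that False by auto
  qed
  have naC2: "\<not> adj E c (w k)" if "k < m" "c \<in> C2" for k c
  proof (cases "k = 0")
    case True then show ?thesis using xnadjC2[OF that(2)] w(2) by (simp add: adj_sym)
  next
    case False
    then have "w k \<in> V - \<Omega>" using int that by simp
    then show ?thesis using comp_closed[OF cc2 that(2)] intC2[of k] that False by auto
  qed
  have wV: "w k \<in> V" if "k \<le> m" for k using wS[OF that] by blast
  have CV: "C1 \<subseteq> V" "C2 \<subseteq> V" using C1S C2S by auto
  have "a \<noteq> b" "a' \<noteq> b'" using ab(3) ab'(3) irr by auto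
  have "\<not> P6_free V E"
  proof (cases "m = 1")
    case True
    have axy: "adj E x y" using wadj[of 0] True w by simp
    show ?thesis
    proof (rule P6_list[OF sg, of b a x y a' b'])
      show "distinct [b, a, x, y, a', b']" using \<open>a \<noteq> b\<close> \<open>a' \<noteq> b'\<close> xy ab ab' xV ynC1 xnC2 yV disj by auto
      show "{b, a, x, y, a', b'} \<subseteq> V" using ab ab' CV xV yV by auto
      show "adj E b a" "adj E a x" "adj E x y" "adj E y a'" "adj E a' b'"
        using ab ab' axy by (auto simp: adj_sym)
      show "\<not> adj E b x" using ab(5) by (simp add: adj_sym)
      show "\<not> adj E b y" using ynadjC1[OF ab(2)] by (simp add: adj_sym)
      show "\<not> adj E a y" using ynadjC1[OF ab(1)] by (simp add: adj_sym)
      show "\<not> adj E b a'" by (rule n12[OF ab(2) ab'(1)])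
      show "\<not> adj E b b'" by (rule n12[OF ab(2) ab'(2)])
      show "\<not> adj E a a'" by (rule n12[OF ab(1) ab'(1)])
      show "\<not> adj E a b'" by (rule n12[OF ab(1) ab'(2)])
      show "\<not> adj E x a'" by (rule xnadjC2[OF ab'(1)])
      show "\<not> adj E x b'" by (rule xnadjC2[OF ab'(2)])
      show "\<not> adj E y b'" by (rule ab'(5))
    qed
  next
    case m1: False
    show ?thesis
    proof (cases "m = 2")
      case True
      have w1: "w 1 \<notin> C1" "w 1 \<notin> C2" "w 1 \<in> V"
        using nC1[of 1] nC2[of 1] wV[of 1] True by auto
      have "w 0 \<noteq> w 1" "w 1 \<noteq> w 2" using injr[of 0 1] injr[of 1 2] True by auto
      then have w1': "w 1 \<noteq> x" "w 1 \<noteq> y" using w True by auto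
      have xw1: "adj E x (w 1)" using wadj[of 0] True w by simp
      have w1y: "adj E (w 1) y" using wadj[of 1] True w by (simp add: numeral_2_eq_2)
      have nxy: "\<not> adj E x y" using indr[of 0 2] True w by simp
      have "\<not> adj E c (w 1)" if "c \<in> C1" for c using naC1[of 1 c] True that by simp
      moreover have "\<not> adj E c (w 1)" if "c \<in> C2" for c using naC2[of 1 c] True that by simp
      ultimately show ?thesis
      proof (intro P6_list[OF sg, of b a x "w 1" y a'])
        assume n1: "\<And>c. c \<in> C1 \<Longrightarrow> \<not> adj E c (w 1)" and n2: "\<And>c. c \<in> C2 \<Longrightarrow> \<not> adj E c (w 1)"
        show "distinct [b, a, x, w 1, y, a']" using \<open>a \<noteq> b\<close> xy ab ab' xV ynC1 xnC2 yV disj w1 w1' by auto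
        show "{b, a, x, w 1, y, a'} \<subseteq> V" using ab ab' CV xV yV w1 by auto
        show "adj E b a" "adj E a x" "adj E x (w 1)" "adj E (w 1) y" "adj E y a'"
          using ab ab' xw1 w1y by (auto simp: adj_sym)
        show "\<not> adj E b x" using ab(5) by (simp add: adj_sym)
        show "\<not> adj E b y" using ynadjC1[OF ab(2)] by (simp add: adj_sym)
        show "\<not> adj E a y" using ynadjC1[OF ab(1)] by (simp add: adj_sym)
        show "\<not> adj E b a'" by (rule n12[OF ab(2) ab'(1)])
        show "\<not> adj E a a'" by (rule n12[OF ab(1) ab'(1)])
        show "\<not> adj E b (w 1)" by (rule n1[OF ab(2)])
        show "\<not> adj E a (w 1)" by (rule n1[OF ab(1)])
        show "\<not> adj E x y" by (rule nxy)
        show "\<not> adj E x a'" by (rule xnadjC2[OF ab'(1)])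
        show "\<not> adj E (w 1) a'" using n2[OF ab'(1)] by (simp add: adj_sym)
      qed
    next
      case False
      then have m3: "3 \<le> m" using m1 m0 by linarith
      have wC: "w k \<notin> C1" "w k \<in> V" if "0 < k" "k \<le> 3" for k using nC1 wV that m3 by auto
      have wna: "\<not> adj E c (w k)" if "0 < k" "k \<le> 3" "c \<in> C1" for k c using naC1 that m3 by auto
      have d: "w 0 \<noteq> w 1" "w 0 \<noteq> w 2" "w 0 \<noteq> w 3" "w 1 \<noteq> w 2" "w 1 \<noteq> w 3" "w 2 \<noteq> w 3"
        using injr[of 0 1] injr[of 0 2] injr[of 0 3] injr[of 1 2] injr[of 1 3] injr[of 2 3] m3 by auto
      have e: "adj E (w 0) (w 1)" "adj E (w 1) (w 2)" "adj E (w 2) (w 3)"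
        using wadj[of 0] wadj[of 1] wadj[of 2] m3 by (auto simp: numeral_2_eq_2 numeral_3_eq_3)
      have ne: "\<not> adj E (w 0) (w 2)" "\<not> adj E (w 0) (w 3)" "\<not> adj E (w 1) (w 3)"
        using indr[of 0 2] indr[of 0 3] indr[of 1 3] m3 by auto
      show ?thesis
      proof (rule P6_list[OF sg, of b a x "w 1" "w 2" "w 3"])
        show "distinct [b, a, x, w 1, w 2, w 3]" using \<open>a \<noteq> b\<close> ab xV wC[of 1] wC[of 2] wC[of 3] d w(2) by auto
        show "{b, a, x, w 1, w 2, w 3} \<subseteq> V" using ab CV xV wC[of 1] wC[of 2] wC[of 3] by auto
        show "adj E b a" "adj E a x" "adj E x (w 1)" "adj E (w 1) (w 2)" "adj E (w 2) (w 3)"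
          using ab e w(2) by (auto simp: adj_sym)
        show "\<not> adj E b x" "\<not> adj E b (w 1)" "\<not> adj E b (w 2)" "\<not> adj E b (w 3)" "\<not> adj E a (w 2)"
          "\<not> adj E a (w 3)" "\<not> adj E x (w 2)" "\<not> adj E x (w 3)" "\<not> adj E (w 1) (w 3)"
          using ab ne w(2) wna[of 1] wna[of 2] wna[of 3] by (auto simp: adj_sym)
        show "\<not> adj E a (w 1)" using ab wna[of 1] by auto
      qed
    qed
  qed
  then show False using assms(2) by blast
qed


end
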